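(* Let $\beta\in(0,1)$, let $\{\mathcal F_i(t)\}_{t\in\mathbb N_0}$ be a filtration on a complete probability space, and let $\{h_i'(t)\}_{t\in\mathbb N}$ be positive, almost surely decreasing, bounded and predictable. Then for every $s_i\in\mathbb N_0$ and every $t\ge s_i$, $h_i'(t+1)=(1-\beta)\underline M_i(s_i,t)$ almost surely.
   Context: Predictable: $h_i'(t)$ is $\mathcal F_i(t-1)$-measurable. With $\beta^\infty:=0$ and $\mathcal S_i(t)$ the stopping times valued in $\{t,t+1,\dots\}\cup\{\infty\}$, set $V_i(t;m):=\operatorname{ess\,sup}_{\tau\in\mathcal S_i(t)}\mathbb E[\sum_{u=t}^{\tau-1}\beta^{u-t}h_i'(u+1)+m\beta^{\tau-t}\mid\mathcal F_i(t)]$ for $m\ge0$ (a.s. continuous in $m$, so it may be evaluated at random $m$). Gittins index: $M_i(t):=\operatorname{ess\,sup}\{X:X>0,\ X\ \mathcal F_i(t)\text{-measurable},\ V_i(t;X)\ge X\}$; lower envelope $\underline M_i(s,t):=\min_{s\le u\le t}M_i(u)$. *)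

theory Defs
  imports "HOL-Probability.Probability" "HOL-Library.Extended_Nat"
begin

definition stopping_times_from ::
  "'a measure \<Rightarrow> (nat \<Rightarrow> 'a measure) \<Rightarrow> nat \<Rightarrow> ('a \<Rightarrow> enat) set" where
  "stopping_times_from M F t =
     {\<tau>. (\<forall>\<omega>\<in>space M. enat t \<le> \<tau> \<omega>) \<and>
          (\<forall>n::nat. {\<omega>\<in>space M. \<tau> \<omega> = enat n} \<in> sets (F n))}"

definition ess_sup_family ::
  "'a measure \<Rightarrow> 'a measure \<Rightarrow> ('a \<Rightarrow> real) set \<Rightarrow> ('a \<Rightarrow> real)" where
  "ess_sup_family M N S =
     (SOME g. g \<in> borel_measurable N \<and> (\<forall>f\<in>S. AE \<omega> in M. f \<omega> \<le> g \<omega>) \<and>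
        (\<forall>g'. g' \<in> borel_measurable N \<and> (\<forall>f\<in>S. AE \<omega> in M. f \<omega> \<le> g' \<omega>)
              \<longrightarrow> (AE \<omega> in M. g \<omega> \<le> g' \<omega>)))"

definition disc_payoff ::
  "real \<Rightarrow> (nat \<Rightarrow> 'a \<Rightarrow> real) \<Rightarrow> nat \<Rightarrow> ('a \<Rightarrow> enat) \<Rightarrow> ('a \<Rightarrow> real) \<Rightarrow> 'a \<Rightarrow> real" where
  "disc_payoff \<beta> h t \<tau> m \<omega> =
     (case \<tau> \<omega> of
        enat k \<Rightarrow> (\<Sum>u\<in>{t..<k}. \<beta> ^ (u - t) * h (u + 1) \<omega>) + m \<omega> * \<beta> ^ (k - t)
      | \<infinity> \<Rightarrow> (\<Sum>n. \<beta> ^ n * h (t + n + 1) \<omega>))"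

definition value_fn ::
  "'a measure \<Rightarrow> (nat \<Rightarrow> 'a measure) \<Rightarrow> real \<Rightarrow> (nat \<Rightarrow> 'a \<Rightarrow> real) \<Rightarrow> nat \<Rightarrow> ('a \<Rightarrow> real) \<Rightarrow> 'a \<Rightarrow> real" where
  "value_fn M F \<beta> h t m =
     ess_sup_family M (F t)
       ((\<lambda>\<tau>. real_cond_exp M (F t) (disc_payoff \<beta> h t \<tau> m)) ` stopping_times_from M F t)"

definition gittins_index ::
  "'a measure \<Rightarrow> (nat \<Rightarrow> 'a measure) \<Rightarrow> real \<Rightarrow> (nat \<Rightarrow> 'a \<Rightarrow> real) \<Rightarrow> nat \<Rightarrow> 'a \<Rightarrow> real" where
  "gittins_index M F \<beta> h t =
     ess_sup_family M (F t)
       {X. X \<in> borel_measurable (F t) \<and> (\<forall>\<omega>\<in>space M. X \<omega> > 0) \<and>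
           (AE \<omega> in M. value_fn M F \<beta> h t X \<omega> > X \<omega>)}"

definition lower_envelope ::
  "'a measure \<Rightarrow> (nat \<Rightarrow> 'a measure) \<Rightarrow> real \<Rightarrow> (nat \<Rightarrow> 'a \<Rightarrow> real) \<Rightarrow> nat \<Rightarrow> nat \<Rightarrow> 'a \<Rightarrow> real" where
  "lower_envelope M F \<beta> h s t \<omega> = Min ((\<lambda>u. gittins_index M F \<beta> h u \<omega>) ` {s..t})"

end

theory Submission
  imports Defs
begin

definition PQ :: "real \<Rightarrow> (nat \<Rightarrow> real) \<Rightarrow> real \<Rightarrow> enat \<Rightarrow> real" where
  "PQ \<beta> b x e = (case e of enat n \<Rightarrow> (\<Sum>i<n. \<beta> ^ i * b i) + x * \<beta> ^ n | \<infinity> \<Rightarrow> (\<Sum>n. \<beta> ^ n * b n))"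

definition Nstar :: "(nat \<Rightarrow> real) \<Rightarrow> real \<Rightarrow> enat" where
  "Nstar b c = (if \<exists>n. b n \<le> c then enat (LEAST n. b n \<le> c) else \<infinity>)"

lemma PQ_summable:
  fixes \<beta> B :: real and b :: "nat \<Rightarrow> real"
  assumes "0 < \<beta>" "\<beta> < 1" "\<And>n. 0 \<le> b n" "\<And>n. b n \<le> B"
  shows "summable (\<lambda>n. \<beta> ^ n * b n)" and "(\<Sum>n. \<beta> ^ n * b n) \<le> B / (1 - \<beta>)"
proof -
  have g: "summable (\<lambda>n. \<beta> ^ n * B)" using assms by (intro summable_mult2 summable_geometric) auto
  show s: "summable (\<lambda>n. \<beta> ^ n * b n)"
    by (rule summable_comparison_test[OF _ g]) (use assms in \<open>auto intro!: mult_left_mono\<close>)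
  have "(\<Sum>n. \<beta> ^ n * b n) \<le> (\<Sum>n. \<beta> ^ n * B)"
    by (rule suminf_le[OF _ s g]) (use assms in \<open>auto intro!: mult_left_mono\<close>)
  also have "\<dots> = B / (1 - \<beta>)"
  proof -
    have "(\<lambda>n. \<beta> ^ n) sums (1 / (1 - \<beta>))" using assms by (intro geometric_sums) auto
    then have "(\<lambda>n. \<beta> ^ n * B) sums (1 / (1 - \<beta>) * B)" by (rule sums_mult2)
    then show ?thesis by (simp add: sums_iff)
  qed
  finally show "(\<Sum>n. \<beta> ^ n * b n) \<le> B / (1 - \<beta>)" .
qed

lemma PQ_bounds:
  fixes \<beta> B x :: real and b :: "nat \<Rightarrow> real"
  assumes "0 < \<beta>" "\<beta> < 1" "\<And>n. 0 \<le> b n" "\<And>n. b n \<le> B" "0 \<le> x"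
  shows "0 \<le> PQ \<beta> b x e" "PQ \<beta> b x e \<le> x + B / (1 - \<beta>)"
proof -
  note s = PQ_summable[of \<beta> b B, OF assms(1-4)]
  have nn: "\<And>n. 0 \<le> \<beta> ^ n * b n" using assms by auto
  show "0 \<le> PQ \<beta> b x e"
    using assms nn by (cases e) (auto simp: PQ_def intro!: sum_nonneg add_nonneg_nonneg suminf_nonneg s)
  show "PQ \<beta> b x e \<le> x + B / (1 - \<beta>)"
  proof (cases e)
    case (enat n)
    have "(\<Sum>i<n. \<beta> ^ i * b i) \<le> (\<Sum>i. \<beta> ^ i * b i)" by (rule sum_le_suminf[OF s(1)]) (use nn in auto)
    moreover have "x * \<beta> ^ n \<le> x" using assms by (simp add: mult_left_le power_le_one)
    ultimately show ?thesis using s(2) enat by (simp add: PQ_def)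
  next
    case infinity
    then show ?thesis using s(2) assms by (simp add: PQ_def)
  qed
qed

lemma PQ_opt:
  fixes \<beta> B x :: real and b :: "nat \<Rightarrow> real"
  assumes b1: "0 < \<beta>" and b2: "\<beta> < 1" and nn: "\<And>n. 0 \<le> b n" and bd: "\<And>n. b n \<le> B"
    and dec: "\<And>n. b (Suc n) \<le> b n" and x: "0 \<le> x"
  shows "PQ \<beta> b x e \<le> PQ \<beta> b x (Nstar b ((1 - \<beta>) * x))"
proof -
  define c where "c = (1 - \<beta>) * x"
  define Q where "Q n = (\<Sum>i<n. \<beta> ^ i * b i) + x * \<beta> ^ n" for n
  define S where "S = (\<Sum>n. \<beta> ^ n * b n)"
  note s = PQ_summable[of \<beta> b B, OF b1 b2 nn bd]
  have step: "Q (Suc n) - Q n = \<beta> ^ n * (b n - c)" for n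
    unfolding Q_def c_def by (simp add: algebra_simps)
  have lim: "Q \<longlonglongrightarrow> S"
  proof -
    have "(\<lambda>n. \<Sum>i<n. \<beta> ^ i * b i) \<longlonglongrightarrow> S" unfolding S_def by (rule summable_LIMSEQ[OF s(1)])
    moreover have "(\<lambda>n. x * \<beta> ^ n) \<longlonglongrightarrow> 0"
      using b1 b2 by (intro tendsto_mult_right_zero LIMSEQ_power_zero) auto
    ultimately have "(\<lambda>n. (\<Sum>i<n. \<beta> ^ i * b i) + x * \<beta> ^ n) \<longlonglongrightarrow> S + 0" by (rule tendsto_add)
    then show ?thesis unfolding Q_def by simp
  qed
  have PQe: "PQ \<beta> b x e' = (case e' of enat n \<Rightarrow> Q n | \<infinity> \<Rightarrow> S)" for e'
    unfolding PQ_def Q_def S_def by (cases e') auto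
  have decb: "decseq b" using dec by (rule decseq_SucI)
  show ?thesis
  proof (cases "\<exists>n. b n \<le> c")
    case True
    define K where "K = (LEAST n. b n \<le> c)"
    have NK: "Nstar b ((1 - \<beta>) * x) = enat K" using True unfolding Nstar_def K_def c_def by simp
    have bK: "b K \<le> c" unfolding K_def using True by (metis LeastI)
    have QK: "Q n \<le> Q K" for n
    proof (cases "n \<le> K")
      case True
      show ?thesis
      proof (rule dec_induct[OF True, where P = "\<lambda>m. Q n \<le> Q m"])
        fix m assume "n \<le> m" "m < K" "Q n \<le> Q m"
        then have "\<not> b m \<le> c" unfolding K_def using not_less_Least by blast
        then have "0 \<le> \<beta> ^ m * (b m - c)" using b1 by simp
        then show "Q n \<le> Q (Suc m)" using step[of m] \<open>Q n \<le> Q m\<close> by linarith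
      qed simp
    next
      case False
      then have "K \<le> n" by simp
      show ?thesis
      proof (rule dec_induct[OF \<open>K \<le> n\<close>, where P = "\<lambda>m. Q m \<le> Q K"])
        fix m assume "K \<le> m" "m < n" "Q m \<le> Q K"
        then have "b m \<le> c" using decseqD[OF decb \<open>K \<le> m\<close>] bK by linarith
        then have "\<beta> ^ m * (b m - c) \<le> 0" using b1 by (simp add: mult_nonneg_nonpos)
        then show "Q (Suc m) \<le> Q K" using step[of m] \<open>Q m \<le> Q K\<close> by linarith
      qed simp
    qed
    have "S \<le> Q K" by (rule LIMSEQ_le_const2[OF lim]) (use QK in auto)
    then show ?thesis unfolding PQe NK using QK by (cases e) auto
  next
    case False
    then have NK: "Nstar b ((1 - \<beta>) * x) = \<infinity>" unfolding Nstar_def c_def by simp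
    have "incseq Q"
    proof (rule incseq_SucI)
      fix n have "0 \<le> \<beta> ^ n * (b n - c)" using False b1 by (simp add: not_le less_imp_le)
      then show "Q n \<le> Q (Suc n)" using step[of n] by linarith
    qed
    then have "Q n \<le> S" for n using lim incseq_le by blast
    then show ?thesis unfolding PQe NK by (cases e) auto
  qed
qed

context sigma_finite_subalgebra
begin

lemma rce_nn:
  assumes [measurable]: "f \<in> borel_measurable M" and "AE x in M. 0 \<le> f x"
  shows "AE x in M. real_cond_exp M F f x = enn2real (nn_cond_exp M F (\<lambda>x. ennreal (f x)) x)"
proof -
  have "AE x in M. ennreal (- f x) = 0" using assms(2) by (auto simp: ennreal_neg)
  then have "AE x in M. nn_cond_exp M F (\<lambda>x. ennreal (- f x)) x = nn_cond_exp M F (\<lambda>x. 0) x"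
    by (intro nn_cond_exp_cong) auto
  moreover have "AE x in M. 0 = nn_cond_exp M F (\<lambda>x. 0) x"
    by (rule nn_cond_exp_F_meas) auto
  ultimately show ?thesis unfolding real_cond_exp_def by auto
qed

lemma rce_F_nn:
  assumes [measurable]: "D \<in> borel_measurable F" and "AE x in M. 0 \<le> D x"
  shows "AE x in M. real_cond_exp M F D x = D x"
proof -
  have [measurable]: "D \<in> borel_measurable M" using measurable_from_subalg[OF subalg assms(1)] .
  have *: "AE x in M. ennreal (D x) = nn_cond_exp M F (\<lambda>x. ennreal (D x)) x"
    by (rule nn_cond_exp_F_meas) auto
  show ?thesis using rce_nn[OF \<open>D \<in> borel_measurable M\<close> assms(2)] assms(2) * by eventually_elim (metis enn2real_ennreal)
qed

lemma rce_mono_nn: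
  assumes [measurable]: "f \<in> borel_measurable M" "g \<in> borel_measurable M" "C \<in> borel_measurable F"
    and "AE x in M. 0 \<le> f x" "AE x in M. f x \<le> g x" "AE x in M. g x \<le> C x"
  shows "AE x in M. real_cond_exp M F f x \<le> real_cond_exp M F g x"
proof -
  have [measurable]: "C \<in> borel_measurable M" using measurable_from_subalg[OF subalg assms(3)] .
  have g0: "AE x in M. 0 \<le> g x" using assms(4,5) by auto
  have 1: "AE x in M. nn_cond_exp M F (\<lambda>x. ennreal (f x)) x \<le> nn_cond_exp M F (\<lambda>x. ennreal (g x)) x"
    by (rule nn_cond_exp_mono) (use assms(5) in \<open>auto intro: ennreal_leI\<close>)
  have 2: "AE x in M. nn_cond_exp M F (\<lambda>x. ennreal (g x)) x \<le> nn_cond_exp M F (\<lambda>x. ennreal (C x)) x"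
    by (rule nn_cond_exp_mono) (use assms(6) in \<open>auto intro: ennreal_leI\<close>)
  have 3: "AE x in M. ennreal (C x) = nn_cond_exp M F (\<lambda>x. ennreal (C x)) x"
    by (rule nn_cond_exp_F_meas) auto
  show ?thesis using rce_nn[OF assms(1) assms(4)] rce_nn[OF assms(2) g0] 1 2 3
  proof eventually_elim
    case (elim x)
    then have "nn_cond_exp M F (\<lambda>x. ennreal (g x)) x < top"
      by (metis ennreal_less_top order_le_less_trans)
    with elim show ?case by (auto intro: enn2real_mono)
  qed
qed

end


lemma sum_shift_t: fixes t d :: nat shows "(\<Sum>u\<in>{t..<t+d}. f (u - t) u) = (\<Sum>i<d. f i (t + i))"
  by (induction d) auto

lemma tau1_ST_gen:
  assumes spaceF: "\<And>n. space (F n) = space M"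
  shows "(\<lambda>_. enat (t + 1)) \<in> stopping_times_from M F t"
proof -
  have "{\<omega> \<in> space M. enat (t + 1) = enat n} \<in> sets (F n)" for n
  proof (cases "n = t + 1")
    case True
    have e: "{\<omega> \<in> space M. enat (t + 1) = enat n} = space (F n)" using True spaceF[of n] by auto
    show ?thesis unfolding e by (rule sets.top)
  next
    case False
    have e: "{\<omega> \<in> space M. enat (t + 1) = enat n} = {}" using False by auto
    show ?thesis unfolding e by (rule sets.empty_sets)
  qed
  moreover have "\<forall>\<omega>\<in>space M. enat t \<le> enat (t + 1)" by auto
  ultimately show ?thesis unfolding stopping_times_from_def by blast
qed

locale gsetting =
  fixes M :: "'a measure" and F :: "nat \<Rightarrow> 'a measure"
    and h :: "nat \<Rightarrow> 'a \<Rightarrow> real" and \<beta> :: real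
  assumes beta: "0 < \<beta>" "\<beta> < 1"
    and prob: "prob_space M"
    and filt: "filtration (space M) F"
    and sub: "\<And>t. subalgebra M (F t)"
    and predictable: "\<And>t. t \<ge> 1 \<Longrightarrow> h t \<in> borel_measurable (F (t - 1))"
    and positive: "\<And>t \<omega>. t \<ge> 1 \<Longrightarrow> \<omega> \<in> space M \<Longrightarrow> h t \<omega> > 0"
    and bounded: "\<exists>B. \<forall>t \<ge> 1. \<forall>\<omega>\<in>space M. h t \<omega> \<le> B"
    and decreasing: "AE \<omega> in M. \<forall>t \<ge> 1. h (t + 1) \<omega> \<le> h t \<omega>"
begin

definition Bh where "Bh = (SOME B. \<forall>t \<ge> 1. \<forall>\<omega>\<in>space M. h t \<omega> \<le> B)"

lemma hB: "t \<ge> 1 \<Longrightarrow> \<omega> \<in> space M \<Longrightarrow> h t \<omega> \<le> Bh"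
  using someI_ex[OF bounded] unfolding Bh_def by blast

lemma sfs: "sigma_finite_subalgebra M (F t)"
  by (rule finite_measure_subalgebra_is_sigma_finite)
    (simp add: finite_measure_subalgebra_def finite_measure_subalgebra_axioms_def sub
       prob_space.axioms(1)[OF prob])

lemma spaceF: "space (F n) = space M"
  using sub[of n] by (simp add: subalgebra_def)

lemma meas_up: "f \<in> borel_measurable (F i) \<Longrightarrow> i \<le> j \<Longrightarrow> f \<in> borel_measurable (F j)"
  using filtration.sets_F_mono[OF filt, of i j] unfolding measurable_def spaceF by auto

lemma measM: "f \<in> borel_measurable (F i) \<Longrightarrow> f \<in> borel_measurable M"
  by (rule measurable_from_subalg[OF sub])

lemma hF: "u \<le> j \<Longrightarrow> h (u + 1) \<in> borel_measurable (F j)"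
  using predictable[of "u+1"] by (auto intro: meas_up)

lemma hM[measurable]: "h (u + 1) \<in> borel_measurable M"
  using hF[of u u] measM by blast

lemma hM'[measurable]: "h (t + i + 1) \<in> borel_measurable M"
  using hM[of "t+i"] by simp

definition bw where "bw t \<omega> = (\<lambda>i. h (t + i + 1) \<omega>)"

lemma payoff_eq:
  assumes "enat t \<le> \<tau> \<omega>"
  shows "disc_payoff \<beta> h t \<tau> X \<omega> = PQ \<beta> (bw t \<omega>) (X \<omega>) (\<tau> \<omega> - enat t)"
proof (cases "\<tau> \<omega>")
  case (enat k)
  then obtain d where k: "k = t + d" using assms by (metis enat_ord_simps(1) le_add_diff_inverse)
  have "(\<Sum>u\<in>{t..<t+d}. \<beta> ^ (u - t) * h (u + 1) \<omega>) = (\<Sum>i<d. \<beta> ^ i * h (t + i + 1) \<omega>)"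
    using sum_shift_t[of "\<lambda>i u. \<beta> ^ i * h (u + 1) \<omega>" t d] by simp
  then show ?thesis using enat k by (simp add: disc_payoff_def PQ_def bw_def)
next
  case infinity
  then show ?thesis by (simp add: disc_payoff_def PQ_def bw_def)
qed

definition DP where "DP t e X \<omega> = PQ \<beta> (bw t \<omega>) (X \<omega>) (e - enat t)"

lemma DP_meas:
  assumes [measurable]: "X \<in> borel_measurable M"
  shows "DP t e X \<in> borel_measurable M"
proof (cases "e - enat t")
  case (enat n)
  have "DP t e X = (\<lambda>\<omega>. (\<Sum>i<n. \<beta> ^ i * h (t + i + 1) \<omega>) + X \<omega> * \<beta> ^ n)"
    by (auto simp: DP_def enat PQ_def bw_def fun_eq_iff)
  then show ?thesis by (simp only:) measurable
next
  case infinity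
  have "DP t e X = (\<lambda>\<omega>. (\<Sum>n. \<beta> ^ n * h (t + n + 1) \<omega>))"
    by (auto simp: DP_def infinity PQ_def bw_def fun_eq_iff)
  then show ?thesis by (simp only:) measurable
qed

lemma tau_meas:
  assumes "\<tau> \<in> stopping_times_from M F t"
  shows "\<tau> \<in> measurable M (count_space UNIV)"
proof -
  have fin: "{\<omega>\<in>space M. \<tau> \<omega> = enat n} \<in> sets M" for n
    using assms sub[of n] unfolding stopping_times_from_def subalgebra_def by auto
  have "{\<omega>\<in>space M. \<tau> \<omega> = \<infinity>} = space M - (\<Union>n. {\<omega>\<in>space M. \<tau> \<omega> = enat n})"
    by auto
  also have "\<dots> \<in> sets M" using fin by auto
  finally have inf: "{\<omega>\<in>space M. \<tau> \<omega> = \<infinity>} \<in> sets M" .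
  have "\<tau> -` {a} \<inter> space M \<in> sets M" for a
    using fin inf by (cases a) (auto simp: vimage_def Int_def conj_commute)
  then show ?thesis unfolding measurable_count_space_eq2_countable by auto
qed

lemma payoff_meas:
  assumes "\<tau> \<in> stopping_times_from M F t" "X \<in> borel_measurable M"
  shows "disc_payoff \<beta> h t \<tau> X \<in> borel_measurable M"
proof -
  have "(\<lambda>\<omega>. DP t (\<tau> \<omega>) X \<omega>) \<in> borel_measurable M"
    by (rule measurable_compose_countable[OF DP_meas[OF assms(2)] tau_meas[OF assms(1)]])
  moreover have "\<omega> \<in> space M \<Longrightarrow> DP t (\<tau> \<omega>) X \<omega> = disc_payoff \<beta> h t \<tau> X \<omega>" for \<omega>
    using assms(1) payoff_eq[of t \<tau> \<omega> X] unfolding stopping_times_from_def DP_def by auto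
  ultimately show ?thesis using measurable_cong by (smt (verit))
qed

definition tstar where "tstar t X \<omega> = enat t + Nstar (bw t \<omega>) ((1 - \<beta>) * X \<omega>)"

lemma tstar_minus: "tstar t X \<omega> - enat t = Nstar (bw t \<omega>) ((1 - \<beta>) * X \<omega>)"
  unfolding tstar_def by (cases "Nstar (bw t \<omega>) ((1 - \<beta>) * X \<omega>)") auto

lemma tstar_ge: "enat t \<le> tstar t X \<omega>"
  unfolding tstar_def by simp

lemma tstar_ST:
  assumes X: "X \<in> borel_measurable (F t)"
  shows "tstar t X \<in> stopping_times_from M F t"
  unfolding stopping_times_from_def
proof (safe intro!: tstar_ge)
  fix m :: nat
  show "{\<omega> \<in> space M. tstar t X \<omega> = enat m} \<in> sets (F m)"
  proof (cases "m < t")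
    case True
    have e: "{\<omega> \<in> space M. tstar t X \<omega> = enat m} = {}"
      using tstar_ge[of t X] True by (metis (mono_tags, lifting) empty_Collect_eq enat_ord_simps(1) not_le)
    show ?thesis unfolding e by (rule sets.empty_sets)
  next
    case False
    then obtain d where m: "m = t + d" by (metis le_add_diff_inverse not_less)
    let ?P = "\<lambda>\<omega> i. h (t + i + 1) \<omega> \<le> (1 - \<beta>) * X \<omega>"
    have eq: "{\<omega> \<in> space M. tstar t X \<omega> = enat m} =
      {\<omega> \<in> space (F m). ?P \<omega> d \<and> (\<forall>i\<in>{..<d}. \<not> ?P \<omega> i)}"
    proof -
      have "tstar t X \<omega> = enat m \<longleftrightarrow> ?P \<omega> d \<and> (\<forall>i\<in>{..<d}. \<not> ?P \<omega> i)" for \<omega>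
      proof -
        have "tstar t X \<omega> = enat m \<longleftrightarrow> Nstar (bw t \<omega>) ((1 - \<beta>) * X \<omega>) = enat d"
          unfolding tstar_def m by (cases "Nstar (bw t \<omega>) ((1 - \<beta>) * X \<omega>)") auto
        also have "\<dots> \<longleftrightarrow> ?P \<omega> d \<and> (\<forall>i\<in>{..<d}. \<not> ?P \<omega> i)"
          unfolding Nstar_def bw_def
          by (auto intro!: Least_equality dest: not_less_Least intro: LeastI)
        finally show ?thesis .
      qed
      then show ?thesis by (auto simp: spaceF)
    qed
    have XF[measurable]: "X \<in> borel_measurable (F m)" using meas_up[OF X] m by simp
    have hFm: "i \<le> d \<Longrightarrow> h (t + i + 1) \<in> borel_measurable (F m)" for i
      using hF[of "t+i" m] m by simp
    have "Measurable.pred (F m) (\<lambda>\<omega>. ?P \<omega> d \<and> (\<forall>i\<in>{..<d}. \<not> ?P \<omega> i))"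
    proof (rule pred_intros_logic(3))
      have [measurable]: "h (t + d + 1) \<in> borel_measurable (F m)" using hFm by simp
      show "Measurable.pred (F m) (\<lambda>\<omega>. ?P \<omega> d)" by measurable
      show "Measurable.pred (F m) (\<lambda>\<omega>. \<forall>i\<in>{..<d}. \<not> ?P \<omega> i)"
      proof (rule pred_intros_countable_bounded(3))
        fix i assume "i \<in> {..<d}"
        then have [measurable]: "h (t + i + 1) \<in> borel_measurable (F m)" using hFm by simp
        show "Measurable.pred (F m) (\<lambda>\<omega>. \<not> ?P \<omega> i)" by measurable
      qed
    qed
    then show ?thesis unfolding eq pred_def .
  qed
qed


definition esp where
  "esp N S g \<longleftrightarrow> g \<in> borel_measurable N \<and> (\<forall>f\<in>S. AE \<omega> in M. f \<omega> \<le> g \<omega>) \<and>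
        (\<forall>g'. g' \<in> borel_measurable N \<and> (\<forall>f\<in>S. AE \<omega> in M. f \<omega> \<le> g' \<omega>)
              \<longrightarrow> (AE \<omega> in M. g \<omega> \<le> g' \<omega>))"

lemma esp_some: "esp N S g \<Longrightarrow> esp N S (ess_sup_family M N S)"
proof -
  let ?P = "\<lambda>g. g \<in> borel_measurable N \<and> (\<forall>f\<in>S. AE \<omega> in M. f \<omega> \<le> g \<omega>) \<and>
        (\<forall>g'. g' \<in> borel_measurable N \<and> (\<forall>f\<in>S. AE \<omega> in M. f \<omega> \<le> g' \<omega>)
              \<longrightarrow> (AE \<omega> in M. g \<omega> \<le> g' \<omega>))"
  assume "esp N S g"
  then have "?P g" unfolding esp_def .
  then have "?P (SOME g. ?P g)" by (rule someI[where P = ?P])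
  then show ?thesis unfolding esp_def ess_sup_family_def .
qed

lemma path_le:
  assumes "\<omega> \<in> space M" "\<forall>t\<ge>1. h (t + 1) \<omega> \<le> h t \<omega>" "0 \<le> X \<omega>" "enat t \<le> \<tau> \<omega>"
  shows "disc_payoff \<beta> h t \<tau> X \<omega> \<le> disc_payoff \<beta> h t (tstar t X) X \<omega>"
proof -
  have "PQ \<beta> (bw t \<omega>) (X \<omega>) (\<tau> \<omega> - enat t) \<le> PQ \<beta> (bw t \<omega>) (X \<omega>) (Nstar (bw t \<omega>) ((1 - \<beta>) * X \<omega>))"
  proof (rule PQ_opt[OF beta])
    fix n
    show "0 \<le> bw t \<omega> n" using positive[of "t+n+1" \<omega>] assms(1) by (simp add: bw_def less_imp_le)
    show "bw t \<omega> n \<le> Bh" using hB[of "t+n+1" \<omega>] assms(1) by (simp add: bw_def)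
    show "bw t \<omega> (Suc n) \<le> bw t \<omega> n" using assms(2) by (auto simp: bw_def)
  qed (use assms in auto)
  then show ?thesis using payoff_eq[of t \<tau> \<omega> X, OF assms(4)] payoff_eq[of t "tstar t X" \<omega> X, OF tstar_ge] tstar_minus by metis
qed

lemma payoff_bounds:
  assumes "\<omega> \<in> space M" "0 \<le> X \<omega>" "enat t \<le> \<tau> \<omega>"
  shows "0 \<le> disc_payoff \<beta> h t \<tau> X \<omega>" "disc_payoff \<beta> h t \<tau> X \<omega> \<le> X \<omega> + Bh / (1 - \<beta>)"
proof -
  have nn: "0 \<le> bw t \<omega> n" for n using positive[of "t+n+1" \<omega>] assms(1) by (simp add: bw_def less_imp_le)
  have bd: "bw t \<omega> n \<le> Bh" for n using hB[of "t+n+1" \<omega>] assms(1) by (simp add: bw_def)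
  show "0 \<le> disc_payoff \<beta> h t \<tau> X \<omega>" "disc_payoff \<beta> h t \<tau> X \<omega> \<le> X \<omega> + Bh / (1 - \<beta>)"
    unfolding payoff_eq[of t \<tau> \<omega> X, OF assms(3)] using PQ_bounds[OF beta nn bd assms(2)] by auto
qed

lemma value_esp:
  assumes X[measurable]: "X \<in> borel_measurable (F t)" and X0: "\<And>\<omega>. \<omega> \<in> space M \<Longrightarrow> 0 \<le> X \<omega>"
  shows "esp (F t) ((\<lambda>\<tau>. real_cond_exp M (F t) (disc_payoff \<beta> h t \<tau> X)) ` stopping_times_from M F t)
           (real_cond_exp M (F t) (disc_payoff \<beta> h t (tstar t X) X))"
proof -
  interpret sigma_finite_subalgebra M "F t" by (rule sfs)
  have XM: "X \<in> borel_measurable M" using measM[OF X] .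
  have ts: "tstar t X \<in> stopping_times_from M F t" by (rule tstar_ST[OF X])
  have PsM: "disc_payoff \<beta> h t (tstar t X) X \<in> borel_measurable M" by (rule payoff_meas[OF ts XM])
  show ?thesis unfolding esp_def
  proof (intro conjI ballI allI impI)
    show "real_cond_exp M (F t) (disc_payoff \<beta> h t (tstar t X) X) \<in> borel_measurable (F t)" by measurable
  next
    fix f assume "f \<in> (\<lambda>\<tau>. real_cond_exp M (F t) (disc_payoff \<beta> h t \<tau> X)) ` stopping_times_from M F t"
    then obtain \<tau> where \<tau>: "\<tau> \<in> stopping_times_from M F t" and f: "f = real_cond_exp M (F t) (disc_payoff \<beta> h t \<tau> X)"
      by blast
    have tge: "\<omega> \<in> space M \<Longrightarrow> enat t \<le> \<tau> \<omega>" for \<omega> using \<tau> unfolding stopping_times_from_def by auto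
    have C[measurable]: "(\<lambda>\<omega>. X \<omega> + Bh / (1 - \<beta>)) \<in> borel_measurable (F t)" by measurable
    show "AE \<omega> in M. f \<omega> \<le> real_cond_exp M (F t) (disc_payoff \<beta> h t (tstar t X) X) \<omega>"
      unfolding f
    proof (rule rce_mono_nn[OF payoff_meas[OF \<tau> XM] PsM C])
      show "AE \<omega> in M. 0 \<le> disc_payoff \<beta> h t \<tau> X \<omega>"
        by (rule AE_I2) (use payoff_bounds X0 tge in auto)
      show "AE \<omega> in M. disc_payoff \<beta> h t \<tau> X \<omega> \<le> disc_payoff \<beta> h t (tstar t X) X \<omega>"
        using decreasing AE_space by eventually_elim (use path_le X0 tge in auto)
      show "AE \<omega> in M. disc_payoff \<beta> h t (tstar t X) X \<omega> \<le> X \<omega> + Bh / (1 - \<beta>)"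
        by (rule AE_I2) (use payoff_bounds X0 tstar_ge in auto)
    qed
  next
    fix g' assume "g' \<in> borel_measurable (F t) \<and> (\<forall>f\<in>(\<lambda>\<tau>. real_cond_exp M (F t) (disc_payoff \<beta> h t \<tau> X)) ` stopping_times_from M F t.
       AE \<omega> in M. f \<omega> \<le> g' \<omega>)"
    then show "AE \<omega> in M. real_cond_exp M (F t) (disc_payoff \<beta> h t (tstar t X) X) \<omega> \<le> g' \<omega>"
      using ts by blast
  qed
qed

lemma value_fn_esp:
  assumes "X \<in> borel_measurable (F t)" "\<And>\<omega>. \<omega> \<in> space M \<Longrightarrow> 0 \<le> X \<omega>"
  shows "esp (F t) ((\<lambda>\<tau>. real_cond_exp M (F t) (disc_payoff \<beta> h t \<tau> X)) ` stopping_times_from M F t)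
           (value_fn M F \<beta> h t X)"
  unfolding value_fn_def by (rule esp_some[OF value_esp[OF assms]])

lemma V_ge:
  assumes "X \<in> borel_measurable (F t)" "\<And>\<omega>. \<omega> \<in> space M \<Longrightarrow> 0 \<le> X \<omega>"
    and "\<tau> \<in> stopping_times_from M F t"
  shows "AE \<omega> in M. real_cond_exp M (F t) (disc_payoff \<beta> h t \<tau> X) \<omega> \<le> value_fn M F \<beta> h t X \<omega>"
  using value_fn_esp[OF assms(1,2)] assms(3) unfolding esp_def by blast

lemma V_le_W:
  assumes "X \<in> borel_measurable (F t)" "\<And>\<omega>. \<omega> \<in> space M \<Longrightarrow> 0 \<le> X \<omega>"
  shows "AE \<omega> in M. value_fn M F \<beta> h t X \<omega> \<le> real_cond_exp M (F t) (disc_payoff \<beta> h t (tstar t X) X) \<omega>"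
  using value_fn_esp[OF assms(1,2)] value_esp[OF assms(1,2)] unfolding esp_def by blast


lemma tau1_ST: "(\<lambda>_. enat (t + 1)) \<in> stopping_times_from M F t"
  by (rule tau1_ST_gen[OF spaceF])

lemma gittins_ae: "AE \<omega> in M. gittins_index M F \<beta> h t \<omega> = h (t + 1) \<omega> / (1 - \<beta>)"
proof -
  interpret sigma_finite_subalgebra M "F t" by (rule sfs)
  define g where "g = (\<lambda>\<omega>. h (t + 1) \<omega> / (1 - \<beta>))"
  define S where "S = {X. X \<in> borel_measurable (F t) \<and> (\<forall>\<omega>\<in>space M. X \<omega> > 0) \<and>
           (AE \<omega> in M. value_fn M F \<beta> h t X \<omega> > X \<omega>)}"
  have hFt[measurable]: "h (t + 1) \<in> borel_measurable (F t)" using hF[of t t] by simp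
  have gF[measurable]: "g \<in> borel_measurable (F t)" unfolding g_def by measurable
  have b1: "0 < 1 - \<beta>" using beta by simp
  have gpos: "\<omega> \<in> space M \<Longrightarrow> 0 < g \<omega>" for \<omega>
    using positive[of "t+1" \<omega>] b1 by (simp add: g_def)
  have up: "AE \<omega> in M. X \<omega> \<le> g \<omega>" if XS: "X \<in> S" for X
  proof -
    have X[measurable]: "X \<in> borel_measurable (F t)" and X0: "\<And>\<omega>. \<omega> \<in> space M \<Longrightarrow> 0 \<le> X \<omega>"
      and XV: "AE \<omega> in M. value_fn M F \<beta> h t X \<omega> > X \<omega>"
      using XS unfolding S_def by (auto simp: less_imp_le)
    have XM[measurable]: "X \<in> borel_measurable M" using measM[OF X] .
    define D where "D = (\<lambda>\<omega>. if g \<omega> < X \<omega> then X \<omega> else X \<omega> + Bh / (1 - \<beta>))"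
    have DF[measurable]: "D \<in> borel_measurable (F t)" unfolding D_def by measurable
    have DM[measurable]: "D \<in> borel_measurable M" using measM[OF DF] .
    have Bh0: "0 \<le> Bh"
    proof -
      obtain \<omega> where "\<omega> \<in> space M" using prob_space.not_empty[OF prob] by blast
      then show ?thesis using hB[of 1 \<omega>] positive[of 1 \<omega>] by simp
    qed
    have D0: "AE \<omega> in M. 0 \<le> D \<omega>"
      by (rule AE_I2) (use X0 Bh0 b1 in \<open>auto simp: D_def\<close>)
    have ts: "tstar t X \<in> stopping_times_from M F t" by (rule tstar_ST[OF X])
    have PsM: "disc_payoff \<beta> h t (tstar t X) X \<in> borel_measurable M" by (rule payoff_meas[OF ts XM])
    have PD: "disc_payoff \<beta> h t (tstar t X) X \<omega> \<le> D \<omega>" if \<omega>: "\<omega> \<in> space M" for \<omega>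
    proof (cases "g \<omega> < X \<omega>")
      case True
      then have "h (t + 1) \<omega> < (1 - \<beta>) * X \<omega>" using b1 by (simp add: g_def pos_divide_less_eq mult.commute)
      then have "bw t \<omega> 0 \<le> (1 - \<beta>) * X \<omega>" by (simp add: bw_def)
      then have "Nstar (bw t \<omega>) ((1 - \<beta>) * X \<omega>) = enat 0"
        unfolding Nstar_def by (auto intro!: Least_equality)
      then have "disc_payoff \<beta> h t (tstar t X) X \<omega> = X \<omega>"
        using payoff_eq[of t "tstar t X" \<omega> X, OF tstar_ge] tstar_minus by (simp add: PQ_def)
      then show ?thesis using True by (simp add: D_def)
    next
      case False
      then show ?thesis using payoff_bounds(2)[of \<omega> X t "tstar t X", OF \<omega> X0[OF \<omega>] tstar_ge] by (simp add: D_def)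
    qed
    have WD: "AE \<omega> in M. real_cond_exp M (F t) (disc_payoff \<beta> h t (tstar t X) X) \<omega> \<le> real_cond_exp M (F t) D \<omega>"
    proof (rule rce_mono_nn[OF PsM DM DF])
      show "AE \<omega> in M. 0 \<le> disc_payoff \<beta> h t (tstar t X) X \<omega>"
        by (rule AE_I2) (use payoff_bounds X0 tstar_ge in auto)
      show "AE \<omega> in M. disc_payoff \<beta> h t (tstar t X) X \<omega> \<le> D \<omega>" by (rule AE_I2) (use PD in auto)
    qed simp
    have VW: "AE \<omega> in M. value_fn M F \<beta> h t X \<omega> \<le> real_cond_exp M (F t) (disc_payoff \<beta> h t (tstar t X) X) \<omega>"
      using V_le_W[of X t] X X0 by blast
    show ?thesis using XV VW WD rce_F_nn[OF DF D0]
    proof eventually_elim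
      case (elim \<omega>)
      then have "X \<omega> < D \<omega>" by linarith
      then show ?case by (auto simp: D_def split: if_splits)
    qed
  qed
  have least: "AE \<omega> in M. g \<omega> \<le> g' \<omega>"
    if g'F: "g' \<in> borel_measurable (F t)" and g'b: "\<forall>X\<in>S. AE \<omega> in M. X \<omega> \<le> g' \<omega>" for g'
  proof -
    define Xn where "Xn n = (\<lambda>\<omega>. g \<omega> - g \<omega> / real (Suc (Suc n)))" for n
    have XnS: "Xn n \<in> S" for n
    proof -
      have XF[measurable]: "Xn n \<in> borel_measurable (F t)" unfolding Xn_def by measurable
      have Xpos: "\<omega> \<in> space M \<Longrightarrow> 0 < Xn n \<omega>" for \<omega>
      proof -
        assume \<omega>: "\<omega> \<in> space M"
        have "g \<omega> / real (Suc (Suc n)) < g \<omega>" using gpos[OF \<omega>] by (simp add: divide_less_eq)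
        then show ?thesis by (simp add: Xn_def)
      qed
      define E where "E = (\<lambda>\<omega>. h (t + 1) \<omega> + Xn n \<omega> * \<beta>)"
      have EF[measurable]: "E \<in> borel_measurable (F t)" unfolding E_def by measurable
      have PE: "disc_payoff \<beta> h t (\<lambda>_. enat (t + 1)) (Xn n) = E"
        by (simp add: fun_eq_iff disc_payoff_def E_def)
      have E0: "AE \<omega> in M. 0 \<le> E \<omega>"
      proof (rule AE_I2)
        fix \<omega> assume \<omega>: "\<omega> \<in> space M"
        have "0 < h (t + 1) \<omega>" using positive[of "t+1" \<omega>] \<omega> by simp
        moreover have "0 \<le> Xn n \<omega> * \<beta>" using Xpos[OF \<omega>] beta by simp
        ultimately show "0 \<le> E \<omega>" unfolding E_def by linarith
      qed
      have EX: "Xn n \<omega> < E \<omega>" if \<omega>: "\<omega> \<in> space M" for \<omega>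
      proof -
        have hp: "0 < h (t + 1) \<omega>" using positive[of "t+1" \<omega>] \<omega> by simp
        have g1: "(1 - \<beta>) * g \<omega> = h (t + 1) \<omega>" using b1 by (simp add: g_def)
        have "(1 - \<beta>) * Xn n \<omega> = (1 - \<beta>) * g \<omega> - ((1 - \<beta>) * g \<omega>) / real (Suc (Suc n))"
          by (simp add: Xn_def right_diff_distrib)
        also have "\<dots> = h (t + 1) \<omega> - h (t + 1) \<omega> / real (Suc (Suc n))" using g1 by simp
        also have "\<dots> < h (t + 1) \<omega>" using hp by simp
        finally show ?thesis by (simp add: E_def algebra_simps)
      qed
      have "AE \<omega> in M. value_fn M F \<beta> h t (Xn n) \<omega> > Xn n \<omega>"
      proof -
        have X0n: "\<And>\<omega>. \<omega> \<in> space M \<Longrightarrow> 0 \<le> Xn n \<omega>" using Xpos less_imp_le by blast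
        have V1: "AE \<omega> in M. real_cond_exp M (F t) E \<omega> \<le> value_fn M F \<beta> h t (Xn n) \<omega>"
          using V_ge[OF XF X0n tau1_ST] unfolding PE .
        show ?thesis using V1 rce_F_nn[OF EF E0] AE_space
        proof eventually_elim
          case (elim \<omega>)
          then show ?case using EX[of \<omega>] by linarith
        qed
      qed
      then show ?thesis unfolding S_def using XF Xpos by auto
    qed
    have "AE \<omega> in M. \<forall>n. Xn n \<omega> \<le> g' \<omega>" unfolding AE_all_countable using g'b XnS by blast
    then show ?thesis
    proof eventually_elim
      case (elim \<omega>)
      have "(\<lambda>n. g \<omega> / real (Suc (Suc n))) \<longlonglongrightarrow> 0"
        by (intro LIMSEQ_Suc lim_const_over_n)
      then have "(\<lambda>n. Xn n \<omega>) \<longlonglongrightarrow> g \<omega> - 0" unfolding Xn_def by (intro tendsto_diff tendsto_const)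
      then have "(\<lambda>n. Xn n \<omega>) \<longlonglongrightarrow> g \<omega>" by simp
      then show ?case by (rule LIMSEQ_le_const2) (use elim in auto)
    qed
  qed
  have "esp (F t) S g" unfolding esp_def using gF up least by blast
  then have "esp (F t) S (gittins_index M F \<beta> h t)" unfolding gittins_index_def S_def by (rule esp_some)
  then have "AE \<omega> in M. gittins_index M F \<beta> h t \<omega> \<le> g \<omega>" "AE \<omega> in M. g \<omega> \<le> gittins_index M F \<beta> h t \<omega>"
    using \<open>esp (F t) S g\<close> unfolding esp_def by blast+
  then show ?thesis by eventually_elim (simp add: g_def)
qed

end

lemma dec_chain:
  fixes a :: "nat \<Rightarrow> real"
  assumes "\<forall>t\<ge>1. a (t + 1) \<le> a t" "u \<le> v"
  shows "a (v + 1) \<le> a (u + 1)"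
  using assms(2)
proof (induction rule: dec_induct)
  case (step n)
  then show ?case using assms(1)[rule_format, of "n+1"] by simp
qed simp

theorem lemma7p1:
  fixes M :: "'a measure" and F :: "nat \<Rightarrow> 'a measure"
    and h :: "nat \<Rightarrow> 'a \<Rightarrow> real" and \<beta> :: real
  assumes beta: "0 < \<beta>" "\<beta> < 1"
    and prob: "prob_space M"
    and complete: "complete_measure M"
    and filt: "filtration (space M) F"
    and sub: "\<And>t. subalgebra M (F t)"
    and predictable: "\<And>t. t \<ge> 1 \<Longrightarrow> h t \<in> borel_measurable (F (t - 1))"
    and positive: "\<And>t \<omega>. t \<ge> 1 \<Longrightarrow> \<omega> \<in> space M \<Longrightarrow> h t \<omega> > 0"
    and bounded: "\<exists>B. \<forall>t \<ge> 1. \<forall>\<omega>\<in>space M. h t \<omega> \<le> B"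
    and decreasing: "AE \<omega> in M. \<forall>t \<ge> 1. h (t + 1) \<omega> \<le> h t \<omega>"
  shows "\<forall>s t. s \<le> t \<longrightarrow>
           (AE \<omega> in M. h (t + 1) \<omega> = (1 - \<beta>) * lower_envelope M F \<beta> h s t \<omega>)"
proof (intro allI impI)
  fix s t :: nat assume st: "s \<le> t"
  interpret gsetting M F h \<beta>
    by (rule gsetting.intro) (fact beta prob filt sub predictable positive bounded decreasing)+
  have "AE \<omega> in M. \<forall>u. gittins_index M F \<beta> h u \<omega> = h (u + 1) \<omega> / (1 - \<beta>)"
    unfolding AE_all_countable using gittins_ae by blast
  then show "AE \<omega> in M. h (t + 1) \<omega> = (1 - \<beta>) * lower_envelope M F \<beta> h s t \<omega>"
    using decreasing
  proof eventually_elim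
    case (elim \<omega>)
    have b1: "0 < 1 - \<beta>" using beta by simp
    have "lower_envelope M F \<beta> h s t \<omega> = Min ((\<lambda>u. h (u + 1) \<omega> / (1 - \<beta>)) ` {s..t})"
      unfolding lower_envelope_def using elim(1) by simp
    also have "\<dots> = h (t + 1) \<omega> / (1 - \<beta>)"
    proof (rule Min_eqI)
      fix y assume "y \<in> (\<lambda>u. h (u + 1) \<omega> / (1 - \<beta>)) ` {s..t}"
      then obtain u where u: "u \<in> {s..t}" "y = h (u + 1) \<omega> / (1 - \<beta>)" by blast
      have "h (t + 1) \<omega> \<le> h (u + 1) \<omega>"
        using dec_chain[of "\<lambda>n. h n \<omega>" u t] elim(2) u(1) by auto
      then show "h (t + 1) \<omega> / (1 - \<beta>) \<le> y" using b1 u(2) by (simp add: divide_right_mono)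
    qed (use st in auto)
    finally show ?case using b1 by simp
  qed
qed

end
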